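(* Let $A,B,C>0$ and $q>1$, and let $f(t)=At-\frac Bt-Ct^q$ and $g(t)=At^2+B-Cqt^{q+1}$ for $t\in(0,+\infty)$. Then there exist $\bar t,t^-,t^+$ such that (i) $0<t^+<\bar t<t^-$ and $f(t^+)=f(t^-)=0$; (ii) $f'(t^+)>0$ and $f'(t^-)<0$; (iii) $g(t)>0$ on $(0,\bar t)$ and $g(t)<0$ on $(\bar t,+\infty)$, if and only if $$\frac{(q-1)^{\frac{q-1}2}}{(q+1)^{\frac{q+1}2}}\cdot\frac{A^{\frac{q+1}2}}{B^{\frac{q-1}2}}>\frac C2.$$ *)

theory Defs
  imports "HOL-Analysis.Analysis"
begin

end

theory Submission
  imports Defs
begin

lemma bern:
  fixes u p :: real assumes u: "u > 0" and p: "p > 1"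
  shows "1 + p*(u-1) \<le> u powr p"
proof -
  define h where "h = (\<lambda>x::real. x powr p - p * x)"
  have D: "(h has_real_derivative (p * x powr (p - 1) - p)) (at x)" if "x > 0" for x
    unfolding h_def using that by (auto intro!: derivative_eq_intros)
  have cont: "continuous_on {a..b} h" if "a > 0" for a b
    using D that by (intro DERIV_atLeastAtMost_imp_continuous_on) (meson less_le_trans)
  have h1: "h 1 = 1 - p" unfolding h_def by simp
  consider "u < 1" | "u = 1" | "u > 1" by linarith
  then show ?thesis
  proof cases
    case 1
    have "h 1 < h u"
    proof (rule DERIV_neg_imp_decreasing_open[OF 1])
      fix x assume x: "u < x" "x < 1"
      have "x powr (p - 1) < 1" using powr_less_mono2[of "p-1" x 1] x u p by simp
      then show "\<exists>y. (h has_real_derivative y) (at x) \<and> y < 0"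
        using D[of x] x u p by (intro exI[of _ "p * x powr (p - 1) - p"]) (auto simp: mult_less_cancel_left1)
    qed (use cont u in auto)
    then show ?thesis using h1 unfolding h_def by (simp add: algebra_simps)
  next
    case 2 then show ?thesis by simp
  next
    case 3
    have "h 1 < h u"
    proof (rule DERIV_pos_imp_increasing_open[OF 3])
      fix x assume x: "1 < x" "x < u"
      have "x powr (p - 1) > 1" using powr_less_mono2[of "p-1" 1 x] x u p by simp
      then show "\<exists>y. (h has_real_derivative y) (at x) \<and> y > 0"
        using D[of x] x u p by (intro exI[of _ "p * x powr (p - 1) - p"]) auto
    qed (use cont in auto)
    then show ?thesis using h1 unfolding h_def by (simp add: algebra_simps)
  qed
qed


lemma keyK:
  fixes A B C q :: real
  assumes A: "A > 0" and B: "B > 0" and q: "q > 1"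
  defines "t0 \<equiv> sqrt (B*(q+1)/(A*(q-1)))"
  defines "K \<equiv> B/((q-1)*t0 powr (q+1))"
  shows "((q - 1) powr ((q - 1) / 2) / (q + 1) powr ((q + 1) / 2))
           * (A powr ((q + 1) / 2) / B powr ((q - 1) / 2)) = K"
    and "t0 > 0" and "K > 0"
    and "\<And>t. t > 0 \<Longrightarrow> A*t^2 - B \<le> 2*K*t powr (q+1)"
    and "A*t0^2 - B = 2*K*t0 powr (q+1)"
proof -
  show t0: "t0 > 0" unfolding t0_def using A B q by simp
  show Kp: "K > 0" unfolding K_def using B q t0 by simp
  have At0: "A*t0^2 = B*(q+1)/(q-1)" unfolding t0_def using A B q by simp
  have lt0: "ln t0 = (ln B + ln (q+1) - ln A - ln (q-1))/2"
    unfolding t0_def using A B q by (simp add: ln_sqrt ln_mult ln_div)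
  have lK: "ln K = ln B - ln (q-1) - (q+1) * ln t0"
    unfolding K_def using A B q t0 by (simp add: ln_mult ln_div ln_powr)
  have lL: "ln (((q - 1) powr ((q - 1) / 2) / (q + 1) powr ((q + 1) / 2))
           * (A powr ((q + 1) / 2) / B powr ((q - 1) / 2))) =
     (q-1)/2 * ln (q-1) - (q+1)/2 * ln (q+1) + (q+1)/2 * ln A - (q-1)/2 * ln B"
    using A B q by (simp add: ln_mult ln_div ln_powr)
  have "ln (((q - 1) powr ((q - 1) / 2) / (q + 1) powr ((q + 1) / 2))
           * (A powr ((q + 1) / 2) / B powr ((q - 1) / 2))) = ln K"
    unfolding lL lK lt0 by (simp add: algebra_simps add_divide_distrib diff_divide_distrib)
  then show "((q - 1) powr ((q - 1) / 2) / (q + 1) powr ((q + 1) / 2))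
           * (A powr ((q + 1) / 2) / B powr ((q - 1) / 2)) = K"
    using A B q Kp by (subst (asm) ln_inj_iff) auto
  show "A*t0^2 - B = 2*K*t0 powr (q+1)"
    unfolding K_def At0 using t0 q by (simp add: field_simps)
  fix t :: real assume t: "t > 0"
  define s where "s = t / t0"
  have s: "s > 0" unfolding s_def using t t0 by simp
  have u: "s^2 > 0" using s by simp
  have b: "1 + ((q+1)/2)*(s^2-1) \<le> (s^2) powr ((q+1)/2)"
    using bern[OF u, of "(q+1)/2"] q by simp
  have "(s^2) powr ((q+1)/2) = s powr (q+1)"
  proof -
    have "s^2 = s powr 2" using s powr_realpow[of s 2] by simp
    moreover have "2 * ((q+1)/2) = q + 1" by simp
    ultimately show ?thesis using powr_powr[of s 2 "(q+1)/2"] by metis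
  qed
  also have "\<dots> = t powr (q+1) / t0 powr (q+1)" unfolding s_def using t t0 by (simp add: powr_divide)
  finally have b2: "1 + ((q+1)/2)*(s^2-1) \<le> t powr (q+1) / t0 powr (q+1)" using b by simp
  have "A*t^2 = A*t0^2 * s^2" unfolding s_def using t0 by (simp add: field_simps)
  then have "A*t^2 - B = 2*B/(q-1) * (1 + ((q+1)/2)*(s^2-1))"
    unfolding At0 using q by (simp add: field_simps)
  also have "\<dots> \<le> 2*B/(q-1) * (t powr (q+1) / t0 powr (q+1))"
    using b2 B q by (intro mult_left_mono) auto
  also have "\<dots> = 2*K*t powr (q+1)" unfolding K_def by simp
  finally show "A*t^2 - B \<le> 2*K*t powr (q+1)" .
qed


theorem proposition4p2:
  fixes A B C q :: real
  assumes "A > 0" and "B > 0" and "C > 0" and "q > 1"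
  defines "f \<equiv> (\<lambda>t::real. A * t - B / t - C * t powr q)"
      and "g \<equiv> (\<lambda>t::real. A * t\<^sup>2 + B - C * q * t powr (q + 1))"
  shows "(\<exists>tbar tm tp :: real.
            0 < tp \<and> tp < tbar \<and> tbar < tm \<and> f tp = 0 \<and> f tm = 0 \<and>
            deriv f tp > 0 \<and> deriv f tm < 0 \<and>
            (\<forall>t. 0 < t \<and> t < tbar \<longrightarrow> g t > 0) \<and>
            (\<forall>t. tbar < t \<longrightarrow> g t < 0))
         \<longleftrightarrow>
         ((q - 1) powr ((q - 1) / 2) / (q + 1) powr ((q + 1) / 2))
           * (A powr ((q + 1) / 2) / B powr ((q - 1) / 2)) > C / 2"
proof -
  note A = \<open>A > 0\<close> and B = \<open>B > 0\<close> and C = \<open>C > 0\<close> and q = \<open>q > 1\<close>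
  define \<phi> where "\<phi> = (\<lambda>t::real. A + B / t^2 - C*q* t powr (q-1))"
  have Df: "(f has_real_derivative \<phi> t) (at t)" if t: "t > 0" for t
  proof -
    have "(f has_real_derivative (A - (- (B * 1) / t^2) - C * (q * t powr (q - 1)))) (at t)"
      unfolding f_def using t by (auto intro!: derivative_eq_intros simp: power2_eq_square)
    then show ?thesis unfolding \<phi>_def by (simp add: algebra_simps)
  qed
  have derivf: "deriv f t = \<phi> t" if "t > 0" for t
    using Df[OF that] by (rule DERIV_imp_deriv)
  have gphi: "g t = t^2 * \<phi> t" if t: "t > 0" for t
  proof -
    have "t powr (q+1) = t powr (q-1) * t^2"
    proof -
      have "t^2 = t powr 2" using t powr_realpow[of t 2] by simp
      moreover have "q - 1 + 2 = q + 1" by simp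
      ultimately show ?thesis using powr_add[of t "q-1" 2] by metis
    qed
    then show ?thesis unfolding g_def \<phi>_def using t by (simp add: field_simps)
  qed
  have gpos: "g t > 0 \<longleftrightarrow> \<phi> t > 0" if "t > 0" for t
    using gphi[OF that] that by (simp add: zero_less_mult_iff)
  have gneg: "g t < 0 \<longleftrightarrow> \<phi> t < 0" if "t > 0" for t
    using gphi[OF that] that by (simp add: mult_less_0_iff)
  have phimono: "\<phi> t < \<phi> s" if "0 < s" "s < t" for s t
  proof -
    have "B / t^2 < B / s^2" using that B
      by (intro divide_strict_left_mono) (auto intro: power_strict_mono)
    moreover have "C*q*(s powr (q-1)) < C*q*(t powr (q-1))"
    proof -
      have "s powr (q-1) < t powr (q-1)" using that q by (intro powr_less_mono2) auto
      then show ?thesis using C q by simp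
    qed
    ultimately show ?thesis unfolding \<phi>_def by simp
  qed
  have fcont: "continuous_on {a..b} f" if "a > 0" for a b
    using Df that by (intro DERIV_atLeastAtMost_imp_continuous_on) (meson less_le_trans)
  have ftimes: "t * f t = A*t^2 - B - C*t powr (q+1)" if t: "t > 0" for t
  proof -
    have "t powr (q+1) = t * t powr q" using t by (simp add: powr_add)
    then show ?thesis unfolding f_def using t by (simp add: field_simps power2_eq_square)
  qed
  define t0 where "t0 = sqrt (B*(q+1)/(A*(q-1)))"
  define K where "K = B/((q-1)*t0 powr (q+1))"
  note kk = keyK[OF A B q, folded t0_def, folded K_def]
  have posiff: "(\<exists>t>0. f t > 0) \<longleftrightarrow> C/2 < K"
  proof
    assume "\<exists>t>0. f t > 0"
    then obtain t where t: "t > 0" "f t > 0" by blast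
    have "t * f t > 0" using t by simp
    then have "C * t powr (q+1) < 2*K*t powr (q+1)" using ftimes[OF t(1)] kk(4)[OF t(1)] by simp
    then show "C/2 < K" using t(1) by simp
  next
    assume CK: "C/2 < K"
    have "t0 * f t0 > 0"
      using ftimes[OF kk(2)] kk(5) CK kk(2) by (simp add: mult_strict_right_mono)
    then show "\<exists>t>0. f t > 0" using kk(2) by (intro exI[of _ t0]) (simp add: zero_less_mult_iff)
  qed
  show ?thesis unfolding kk(1)
  proof
    assume "\<exists>tbar tm tp :: real.
            0 < tp \<and> tp < tbar \<and> tbar < tm \<and> f tp = 0 \<and> f tm = 0 \<and>
            deriv f tp > 0 \<and> deriv f tm < 0 \<and>
            (\<forall>t. 0 < t \<and> t < tbar \<longrightarrow> g t > 0) \<and>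
            (\<forall>t. tbar < t \<longrightarrow> g t < 0)"
    then obtain tbar tp where h: "0 < tp" "tp < tbar" "f tp = 0"
        "\<forall>t. 0 < t \<and> t < tbar \<longrightarrow> g t > 0" by blast
    have "f tp < f tbar"
    proof (rule DERIV_pos_imp_increasing_open[OF h(2)])
      fix x assume x: "tp < x" "x < tbar"
      then have "\<phi> x > 0" using h gpos[of x] by auto
      then show "\<exists>y. (f has_real_derivative y) (at x) \<and> y > 0" using Df[of x] x h by auto
    qed (use fcont h in auto)
    then have "\<exists>t>0. f t > 0" using h by (intro exI[of _ tbar]) auto
    then show "C/2 < K" using posiff by blast
  next
    assume "C/2 < K"
    then obtain t1 where t1: "t1 > 0" "f t1 > 0" using posiff by blast
    define a where "a = min 1 (B/(C*q+B))"
    have Cq: "C*q > 0" using C q by simp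
    then have a: "a > 0" "a \<le> 1" unfolding a_def using B by auto
    have "a powr (q-1) \<le> 1" using powr_mono2[of "q-1" a 1] a q by simp
    then have "C*q*a powr (q-1) \<le> C*q" using C q by (simp add: mult_left_le)
    moreover have "B/a^2 \<ge> B/a"
      using a B by (intro divide_left_mono) (auto simp: power2_eq_square mult_left_le)
    moreover have "B/a \<ge> C*q + B"
    proof -
      have "a \<le> B/(C*q+B)" unfolding a_def by simp
      moreover have "C*q+B > 0" using B Cq by simp
      ultimately have "a * (C*q+B) \<le> B" by (simp add: pos_le_divide_eq)
      then show ?thesis using a by (simp add: field_simps)
    qed
    ultimately have pa: "\<phi> a > 0" unfolding \<phi>_def using A B by simp
    define M where "M = max 1 ((A+B)/(C*q) + 1)"
    define b where "b = M powr (1/(q-1))"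
    have M: "M \<ge> 1" unfolding M_def by simp
    have b1: "b \<ge> 1" unfolding b_def using M q by (simp add: ge_one_powr_ge_zero)
    have bM: "b powr (q-1) = M" unfolding b_def using M q by (simp add: powr_powr)
    have "B/b^2 \<le> B" using b1 B by (simp add: field_simps one_le_power)
    moreover have "C*q*M > A + B"
    proof -
      have "M > (A+B)/(C*q)" unfolding M_def by simp
      then show ?thesis using C q by (simp add: field_simps)
    qed
    ultimately have pb: "\<phi> b < 0" unfolding \<phi>_def bM by simp
    have ab: "a \<le> b" using a b1 by simp
    have "continuous_on {a..b} \<phi>" unfolding \<phi>_def using a
      by (intro continuous_intros) auto
    then obtain tbar where tb: "a \<le> tbar" "tbar \<le> b" "\<phi> tbar = 0"
      using IVT2'[of \<phi> b 0 a] pa pb ab by auto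
    have tb0: "tbar > 0" using tb a by simp
    have gl: "\<forall>t. 0 < t \<and> t < tbar \<longrightarrow> g t > 0"
      using gpos phimono tb(3) by (metis)
    have gr: "\<forall>t. tbar < t \<longrightarrow> g t < 0"
      using gneg phimono tb(3) tb0 by (metis less_trans)
    have fup: "f s < f t" if "0 < s" "s < t" "t \<le> tbar" for s t
    proof (rule DERIV_pos_imp_increasing_open[OF that(2)])
      fix x assume x: "s < x" "x < t"
      then have "\<phi> x > 0" using that phimono[of x tbar] tb(3) by auto
      then show "\<exists>y. (f has_real_derivative y) (at x) \<and> y > 0" using Df[of x] x that by auto
    qed (use fcont that in auto)
    have fdown: "f t < f s" if "tbar \<le> s" "s < t" for s t
    proof (rule DERIV_neg_imp_decreasing_open[OF that(2)])
      fix x assume x: "s < x" "x < t"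
      then have "\<phi> x < 0" using that phimono[of tbar x] tb(3) tb0 by auto
      then show "\<exists>y. (f has_real_derivative y) (at x) \<and> y < 0" using Df[of x] x that tb0 by auto
    qed (use fcont that tb0 in auto)
    have fbar: "f tbar > 0"
    proof -
      consider "t1 < tbar" | "t1 = tbar" | "tbar < t1" by linarith
      then show ?thesis
      proof cases
        case 1 then show ?thesis using fup[of t1 tbar] t1 by auto
      next
        case 2 then show ?thesis using t1 by simp
      next
        case 3 then show ?thesis using fdown[of tbar t1] t1 by auto
      qed
    qed
    define a' where "a' = min (tbar/2) (min 1 (B/(A+B)))"
    have BA: "B/(A+B) > 0" "B/(A+B) \<le> 1" using A B by auto
    have a': "a' > 0" "a' < tbar" "a' \<le> 1" "a' \<le> B/(A+B)"
      unfolding a'_def using tb0 BA by linarith+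
    have "a'^2 \<le> a'" using a' by (simp add: power2_eq_square mult_left_le)
    then have i1: "A*a'^2 \<le> A*a'" using A by (simp add: mult_left_mono)
    have i2: "A*a' < a'*(A+B)" using a' B by (simp add: algebra_simps)
    have "A+B > 0" using A B by simp
    then have i3: "a'*(A+B) \<le> B" using a'(4) by (simp add: pos_le_divide_eq)
    have "A*a'^2 < B" using i1 i2 i3 by linarith
    then have "a' * f a' < 0" using ftimes[OF a'(1)] a'(1) C by (smt (verit) powr_gt_zero mult_pos_pos)
    then have fa': "f a' < 0" using a'(1) by (simp add: mult_less_0_iff)
    obtain tp where tp: "a' \<le> tp" "tp \<le> tbar" "f tp = 0"
      using IVT'[of f a' 0 tbar] fa' fbar a' fcont[OF a'(1)] by auto
    have tp2: "tp < tbar" using tp fbar by (cases "tp = tbar") auto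
    have tp0: "tp > 0" using tp a' by simp
    define X where "X = (A/C + 1) powr (1/(q-1))"
    define b' where "b' = max (2*tbar) X"
    have AC: "A/C > 0" using A C by simp
    have X0: "X > 0" unfolding X_def using AC by simp
    have b': "b' > tbar" "b' \<ge> X" unfolding b'_def using tb0 by auto
    have b'0: "b' > 0" using b' tb0 by simp
    have "X powr (q-1) = A/C + 1" unfolding X_def using AC q by (simp add: powr_powr)
    moreover have "X powr (q-1) \<le> b' powr (q-1)" using b' X0 q by (intro powr_mono2) auto
    ultimately have "b' powr (q-1) > A/C" by simp
    then have "C * b' powr (q-1) > A" using C by (simp add: field_simps)
    then have "b' * (C * b' powr (q-1)) > b' * A" using b'0 by simp
    moreover have "b' * b' powr (q-1) = b' powr q" using b'0 by (simp add: powr_add[symmetric] powr_mult_base)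
    ultimately have "C * b' powr q > A * b'" by (simp add: algebra_simps)
    then have fb': "f b' < 0" unfolding f_def using B b'0 by (smt (verit) divide_pos_pos)
    obtain tm where tm: "tbar \<le> tm" "tm \<le> b'" "f tm = 0"
      using IVT2'[of f b' 0 tbar] fb' fbar b' fcont[OF tb0] by auto
    have tm2: "tbar < tm" using tm fbar by (cases "tm = tbar") auto
    have tm0: "tm > 0" using tm2 tb0 by simp
    have "deriv f tp > 0" using derivf[OF tp0] phimono[OF tp0 tp2] tb(3) by simp
    moreover have "deriv f tm < 0" using derivf[OF tm0] phimono[OF tb0 tm2] tb(3) by simp
    ultimately show "\<exists>tbar tm tp :: real.
            0 < tp \<and> tp < tbar \<and> tbar < tm \<and> f tp = 0 \<and> f tm = 0 \<and>
            deriv f tp > 0 \<and> deriv f tm < 0 \<and>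
            (\<forall>t. 0 < t \<and> t < tbar \<longrightarrow> g t > 0) \<and>
            (\<forall>t. tbar < t \<longrightarrow> g t < 0)"
      using tp0 tp2 tm2 tp tm gl gr by blast
  qed
qed

end
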